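(* Let $a>0$. Then $$\int_0^1 f_a(x)\,dx=\frac{1}{1+a}\Bigl[1-\frac{a\pi}{a+1}\cot\frac{a\pi}{a+1}\Bigr]$$ and $$\int_0^{a/(a+1)} f_a(x)\,dx=\frac{1}{2(1+a)^2}\Bigl[1+a+a^2-a\pi\cot\frac{a\pi}{a+1}\Bigr].$$
   Context: For $a>0$ let $\phi_a(x)=x^a-x^{a+1}$ on $[0,1]$, strictly increasing on $[0,x_0]$ and strictly decreasing on $[x_0,1]$ with $x_0=a/(a+1)$. Let $l_a,r_a$ be the restrictions of $\phi_a$ to $[0,x_0]$ and $[x_0,1]$. Define $f_a(x)=r_a^{-1}(\phi_a(x))$ for $0\le x\le x_0$ and $f_a(x)=l_a^{-1}(\phi_a(x))$ for $x_0\le x\le1$. *)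

theory Defs
  imports "HOL-Analysis.Analysis"
begin

definition phi :: "real \<Rightarrow> real \<Rightarrow> real" where
  "phi a x = x powr a - x powr (a + 1)"

definition xzero :: "real \<Rightarrow> real" where
  "xzero a = a / (a + 1)"

definition f :: "real \<Rightarrow> real \<Rightarrow> real" where
  "f a x = (if x \<le> xzero a
            then the_inv_into {xzero a..1} (phi a) (phi a x)
            else the_inv_into {0..xzero a} (phi a) (phi a x))"

end

theory Submission imports Defs begin

lemma Gamma_reflection_real: "Gamma (x::real) * Gamma (1 - x) = pi / sin (pi * x)"
proof -
  have "complex_of_real (Gamma x * Gamma (1 - x)) = Gamma (complex_of_real x) * Gamma (complex_of_real (1 - x))"
    by (simp only: Gamma_complex_of_real of_real_mult)
  also have "complex_of_real (1 - x) = 1 - complex_of_real x" by simp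
  also have "Gamma (complex_of_real x) * Gamma (1 - complex_of_real x) = of_real pi / sin (of_real pi * of_real x)" by (rule Gamma_reflection_complex)
  also have "\<dots> = complex_of_real (pi / sin (pi * x))" by (simp add: sin_of_real flip: of_real_mult)
  finally show ?thesis by (simp only: of_real_eq_iff)
qed
lemma Digamma_reflection_real:
  assumes "0 < x" "x < (1::real)"
  shows "Digamma (1 - x) - Digamma x = pi * cot (pi * x)"
proof -
  have nz1: "x \<notin> \<int>\<^sub>\<le>\<^sub>0" "1 - x \<notin> \<int>\<^sub>\<le>\<^sub>0" using assms
    by (auto elim!: nonpos_Ints_cases)
  have s: "sin (pi * x) > 0" using assms by (intro sin_gt_zero) auto
  have d1: "((\<lambda>x. Gamma x * Gamma (1 - x)) has_field_derivative
      (Gamma x * Digamma x * Gamma (1 - x) + Gamma x * (Gamma (1-x) * Digamma (1-x) * (-1)))) (at x)"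
    using nz1 by (auto intro!: derivative_eq_intros)
  have d2: "((\<lambda>x. pi / sin (pi * x)) has_field_derivative
      (- (pi * (cos (pi * x) * pi) / (sin (pi * x))^2))) (at x)"
    using s by (auto intro!: derivative_eq_intros simp: power2_eq_square)
  have eqf: "(\<lambda>x. Gamma x * Gamma (1 - x)) = (\<lambda>x::real. pi / sin (pi * x))"
    using Gamma_reflection_real by auto
  have "Gamma x * Digamma x * Gamma (1 - x) + Gamma x * (Gamma (1-x) * Digamma (1-x) * (-1))
        = - (pi * (cos (pi * x) * pi) / (sin (pi * x))^2)"
    using DERIV_unique[OF d1 d2[folded eqf]] by simp
  hence "(Gamma x * Gamma (1 - x)) * (Digamma (1 - x) - Digamma x) = pi * pi * cos (pi * x) / (sin (pi * x))^2"
    by (simp add: algebra_simps)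
  hence "(pi / sin (pi * x)) * (Digamma (1 - x) - Digamma x) = pi * pi * cos (pi * x) / (sin (pi * x))^2"
    by (simp only: Gamma_reflection_real)
  moreover have "Digamma (1 - x) - Digamma x = (sin (pi * x) / pi) * ((pi / sin (pi * x)) * (Digamma (1 - x) - Digamma x))"
    using s by simp
  ultimately have "Digamma (1 - x) - Digamma x = (sin (pi * x) / pi) * (pi * pi * cos (pi * x) / (sin (pi * x))^2)"
    by simp
  also have "\<dots> = pi * cot (pi * x)" using s by (simp add: cot_def power2_eq_square)
  finally show ?thesis .
qed
lemma cot_series:
  assumes "0 < q" "q < (1::real)"
  shows "(\<lambda>n. 1 / (real n + q) - 1 / (real n + 2 - q)) sums (pi * cot (pi * q) + 1 / (1 - q))"
proof -
  have s1: "(\<lambda>k. inverse (real (Suc k)) - inverse (z + real k)) sums (Digamma z + euler_mascheroni)"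
    if "z \<noteq> 0" for z :: real
    using summable_Digamma[OF that] by (simp add: Digamma_def summable_sums)
  have "(\<lambda>k. (inverse (real (Suc k)) - inverse ((1 - q) + real k)) - (inverse (real (Suc k)) - inverse (q + real k)))
      sums ((Digamma (1 - q) + euler_mascheroni) - (Digamma q + euler_mascheroni))"
    using assms by (intro sums_diff s1) auto
  moreover have "(\<lambda>k. (inverse (real (Suc k)) - inverse ((1 - q) + real k)) - (inverse (real (Suc k)) - inverse (q + real k)))
     = (\<lambda>k. 1 / (real k + q) - 1 / (real k + 1 - q))"
    by (rule ext) (simp add: inverse_eq_divide add_ac add_diff_eq)
  moreover have "(Digamma (1 - q) + euler_mascheroni) - (Digamma q + euler_mascheroni) = pi * cot (pi * q)"
    using Digamma_reflection_real[OF assms] by simp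
  ultimately have a: "(\<lambda>k. 1 / (real k + q) - 1 / (real k + 1 - q)) sums (pi * cot (pi * q))"
    by simp
  have b: "(\<lambda>n. (1 / (real n + 1 - q)) - (1 / (real (Suc n) + 1 - q))) sums ((1 / (real 0 + 1 - q)) - 0)"
  proof (intro telescope_sums' tendsto_divide_0[OF tendsto_const])
    have "filterlim (\<lambda>n. (1 - q) + real n) at_top sequentially"
      by (intro filterlim_tendsto_add_at_top[OF tendsto_const] filterlim_real_sequentially)
    moreover have "(\<lambda>n. (1 - q) + real n) = (\<lambda>n. real n + 1 - q)" by (rule ext) simp
    ultimately show "filterlim (\<lambda>n. real n + 1 - q) at_infinity sequentially"
      using filterlim_at_top_imp_at_infinity by metis
  qed
  have "(\<lambda>n. (1 / (real n + q) - 1 / (real n + 1 - q)) + ((1 / (real n + 1 - q)) - (1 / (real (Suc n) + 1 - q))))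
     sums (pi * cot (pi * q) + ((1 / (real 0 + 1 - q)) - 0))"
    by (intro sums_add a b)
  moreover have "(\<lambda>n. (1 / (real n + q) - 1 / (real n + 1 - q)) + ((1 / (real n + 1 - q)) - (1 / (real (Suc n) + 1 - q))))
    = (\<lambda>n. 1 / (real n + q) - 1 / (real n + 2 - q))"
    by (rule ext) (simp add: add_ac)
  ultimately show ?thesis by simp
qed
lemma powr_term_eq:
  assumes "0 < (w::real)" "a > 0"
  shows "(w * w powr a)^n * (1 - (w powr a)^2) = w powr (real n * (a+1)) - w powr (real n * (a+1) + 2*a)"
proof -
  have "w * w powr a = w powr (a+1)" using assms by (simp add: powr_add)
  hence "(w * w powr a)^n = w powr (real n * (a+1))" using assms by (simp add: powr_power)
  moreover have "(w powr a)^2 = w powr (2*a)" using assms by (simp add: powr_power mult.commute)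
  ultimately show ?thesis using assms by (simp add: algebra_simps powr_add)
qed

lemma series_integral:
  assumes a: "a > (0::real)"
  defines "T \<equiv> (\<lambda>n::nat. 1 / (real n * (a+1) + 1) - 1 / (real n * (a+1) + 2*a + 1))"
  shows "((\<lambda>w. if 0 < w \<and> w < 1 then (1 - (w powr a)^2) / (1 - w * w powr a) else 0) has_integral
           (1 / (a+1) * (pi * cot (pi * (1/(a+1))) + 1 / (1 - 1/(a+1))))) {0..1}"
proof -
  define t where "t = (\<lambda>n w. if 0 < w \<and> w < 1 then (w * w powr a)^n * (1 - (w powr a)^2) else (0::real))"
  define g where "g = (\<lambda>w. if 0 < w \<and> w < 1 then (1 - (w powr a)^2) / (1 - w * w powr a) else (0::real))"
  have tint: "(t n has_integral T n) {0..1}" for n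
  proof -
    have nn: "0 \<le> real n * (a+1)" using a by simp
    have "((\<lambda>w. w powr (real n * (a+1)) - w powr (real n * (a+1) + 2*a)) has_integral
          (1 powr (real n * (a+1) + 1) / (real n * (a+1) + 1) - 1 powr (real n * (a+1) + 2*a + 1) / (real n * (a+1) + 2*a + 1))) {0..1}"
      by (intro has_integral_diff has_integral_powr_from_0) (use a nn in linarith)+
    hence hT: "((\<lambda>w. w powr (real n * (a+1)) - w powr (real n * (a+1) + 2*a)) has_integral T n) {0..1}"
      by (simp add: T_def add_ac)
    show ?thesis
      by (rule has_integral_spike_finite[where S="{0,1}", OF _ _ hT]) (auto simp: t_def powr_term_eq a)
  qed
  have sumT: "T sums (1 / (a+1) * (pi * cot (pi * (1/(a+1))) + 1 / (1 - 1/(a+1))))"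
  proof -
    have "(\<lambda>n. 1 / (a+1) * (1 / (real n + 1/(a+1)) - 1 / (real n + 2 - 1/(a+1)))) sums
          (1 / (a+1) * (pi * cot (pi * (1/(a+1))) + 1 / (1 - 1/(a+1))))"
      using a by (intro sums_mult cot_series) (auto simp: field_simps)
    moreover have "(\<lambda>n. 1 / (a+1) * (1 / (real n + 1/(a+1)) - 1 / (real n + 2 - 1/(a+1)))) = T"
    proof (rule ext)
      fix n
      have e1: "(a+1) * (real n + 1/(a+1)) = real n*(a+1) + 1" using a by (simp add: field_simps)
      have e2: "(a+1) * (real n + 2 - 1/(a+1)) = real n*(a+1) + 2*a + 1" using a by (simp add: field_simps)
      have "1 / (a+1) * (1 / (real n + 1/(a+1)) - 1 / (real n + 2 - 1/(a+1)))
         = 1 / ((a+1) * (real n + 1/(a+1))) - 1 / ((a+1) * (real n + 2 - 1/(a+1)))"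
        by (simp add: right_diff_distrib)
      also have "\<dots> = T n" by (simp only: e1 e2 T_def)
      finally show "1 / (a+1) * (1 / (real n + 1/(a+1)) - 1 / (real n + 2 - 1/(a+1))) = T n" .
    qed
    ultimately show ?thesis by simp
  qed
  hence sT: "T sums suminf T" by (simp add: sums_iff)
  have sv: "suminf T = 1 / (a+1) * (pi * cot (pi * (1/(a+1))) + 1 / (1 - 1/(a+1)))"
    using sumT by (simp add: sums_iff)
  have mc: "g integrable_on {0..1} \<and> ((\<lambda>N. integral {0..1} (\<lambda>w. \<Sum>n<N. t n w)) \<longlonglongrightarrow> integral {0..1} g)"
  proof (rule monotone_convergence_increasing)
    show "(\<lambda>w. \<Sum>n<N. t n w) integrable_on {0..1}" for N
      using tint by (intro integrable_sum) (auto simp: integrable_on_def)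
    show "(\<Sum>n<N. t n w) \<le> (\<Sum>n<Suc N. t n w)" if "w \<in> {0..1}" for N w
    proof -
      have "t N w \<ge> 0"
      proof (cases "0 < w \<and> w < 1")
        case True
        hence "w powr a \<le> 1" using a True by (intro powr_le1) auto
        moreover have "w powr a \<ge> 0" by simp
        ultimately have "(w powr a)^2 \<le> 1" by (simp add: power_le_one)
        thus ?thesis using True by (simp add: t_def)
      qed (auto simp: t_def)
      thus ?thesis by simp
    qed
    show "(\<lambda>N. \<Sum>n<N. t n w) \<longlonglongrightarrow> g w" if "w \<in> {0..1}" for w
    proof (cases "0 < w \<and> w < 1")
      case True
      have "w powr a < 1" using True a by (simp add: powr01_less_one)
      hence "w * w powr a < 1" using True by (smt (verit) mult_less_cancel_right1 powr_gt_zero)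
      hence "norm (w * w powr a) < 1" using True by simp
      from sums_mult2[OF geometric_sums[OF this], of "1 - (w powr a)^2"]
      have "(\<lambda>n. (w * w powr a)^n * (1 - (w powr a)^2)) sums (1 / (1 - w * w powr a) * (1 - (w powr a)^2))" .
      thus ?thesis using True by (simp add: sums_def t_def g_def)
    next
      case False
      hence "t n w = 0" for n unfolding t_def by argo
      hence "(\<lambda>N. \<Sum>n<N. t n w) = (\<lambda>N. 0)" by simp
      moreover have "g w = 0" unfolding g_def using False by argo
      ultimately show ?thesis by simp
    qed
    have "integral {0..1} (\<lambda>w. \<Sum>n<N. t n w) = (\<Sum>n<N. T n)" for N
      using tint by (intro integral_unique has_integral_sum) auto
    thus "bounded (range (\<lambda>N. integral {0..1} (\<lambda>w. \<Sum>n<N. t n w)))"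
      using summable_imp_sums_bounded[OF sums_summable[OF sT]] by simp
  qed
  have "integral {0..1} (\<lambda>w. \<Sum>n<N. t n w) = (\<Sum>n<N. T n)" for N
    using tint by (intro integral_unique has_integral_sum) auto
  with mc have "(\<lambda>N. \<Sum>n<N. T n) \<longlonglongrightarrow> integral {0..1} g" by simp
  with sT have "integral {0..1} g = suminf T" by (simp add: sums_def LIMSEQ_unique)
  with mc have "(g has_integral suminf T) {0..1}" using has_integral_integral by metis
  thus "(g has_integral (1 / (a+1) * (pi * cot (pi * (1/(a+1))) + 1 / (1 - 1/(a+1))))) {0..1}"
    unfolding sv .
qed
lemma phi_alt: "x \<ge> 0 \<Longrightarrow> phi a x = x powr a * (1 - x)"
  by (cases "x = 0") (auto simp: phi_def powr_add algebra_simps)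

lemma phi_cont: "a > 0 \<Longrightarrow> continuous_on {0..} (phi a)"
  unfolding phi_def by (intro continuous_on_diff continuous_on_powr' continuous_on_id continuous_on_const) auto

lemma phi_deriv:
  assumes "t > 0"
  shows "(phi a has_real_derivative (t powr (a - 1) * (a - (a+1) * t))) (at t)"
proof -
  have "((\<lambda>x. x powr a - x powr (a+1)) has_real_derivative (a * t powr (a - 1) - (a+1) * t powr (a + 1 - 1))) (at t)"
    using assms by (intro derivative_intros has_real_derivative_powr)
  moreover have "t powr (a + 1 - 1) = t powr ((a - 1) + 1)" by simp
  hence "t powr (a + 1 - 1) = t powr (a - 1) * t" using assms
    by (simp only: powr_add powr_one)
  ultimately show ?thesis unfolding phi_def[abs_def] by (simp add: algebra_simps)
qed

lemma phi_incr:
  assumes a: "a > 0" and "0 \<le> x" "x < y" "y \<le> a/(a+1)"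
  shows "phi a x < phi a y"
proof (rule DERIV_pos_imp_increasing_open[OF \<open>x < y\<close>])
  fix t assume t: "x < t" "t < y"
  have "t < a/(a+1)" using t assms by simp
  hence "(a+1) * t < a" using a by (simp add: field_simps)
  thus "\<exists>d. (phi a has_real_derivative d) (at t) \<and> 0 < d"
    using t assms by (intro exI[of _ "t powr (a - 1) * (a - (a+1) * t)"] conjI phi_deriv) auto
next
  show "continuous_on {x..y} (phi a)"
    by (rule continuous_on_subset[OF phi_cont[OF a]]) (use assms in auto)
qed

lemma phi_decr:
  assumes a: "a > 0" and "a/(a+1) \<le> x" "x < y" "y \<le> 1"
  shows "phi a y < phi a x"
proof (rule DERIV_neg_imp_decreasing_open[OF \<open>x < y\<close>])
  fix t assume t: "x < t" "t < y"
  have "0 < a/(a+1)" using a by simp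
  have "t > a/(a+1)" using t assms by simp
  hence "(a+1) * t > a" using a by (simp add: field_simps)
  moreover have "t > 0" using t assms \<open>0 < a/(a+1)\<close> by linarith
  ultimately show "\<exists>d. (phi a has_real_derivative d) (at t) \<and> d < 0"
    by (intro exI[of _ "t powr (a - 1) * (a - (a+1) * t)"] conjI phi_deriv) (auto simp: mult_pos_neg)
next
  have "0 < a/(a+1)" using a by simp
  show "continuous_on {x..y} (phi a)"
    by (rule continuous_on_subset[OF phi_cont[OF a]]) (use assms \<open>0 < a/(a+1)\<close> in \<open>auto intro: order_trans[of 0 "a/(a+1)"]\<close>)
qed
definition Qf :: "real \<Rightarrow> real \<Rightarrow> real" where
  "Qf b w = (if w = 1 then b else (1 - w powr b) / (1 - w))"

lemma Qf_isCont1: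
  assumes "b > 0"
  shows "isCont (Qf b) 1"
proof -
  have "((\<lambda>y. y powr b) has_real_derivative b * 1 powr (b - 1)) (at 1)"
    by (rule has_real_derivative_powr) simp
  hence "((\<lambda>y. (y powr b - 1 powr b) / (y - 1)) \<longlongrightarrow> b * 1 powr (b - 1)) (at 1)"
    by (simp add: has_field_derivative_iff)
  hence lim: "((\<lambda>y. (y powr b - 1) / (y - 1)) \<longlongrightarrow> b) (at 1)" by simp
  have "eventually (\<lambda>y. (y powr b - 1) / (y - 1) = Qf b y) (at 1)"
    unfolding eventually_at_filter
    by (intro always_eventually allI impI) (auto simp: Qf_def field_simps)
  from tendsto_cong[OF this] lim have "(Qf b \<longlongrightarrow> b) (at 1)" by simp
  thus ?thesis by (simp add: isCont_def Qf_def)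
qed

lemma Qf_cont:
  assumes "b > 0"
  shows "continuous_on {0..1} (Qf b)"
proof -
  have "continuous_on {0..1/2} (\<lambda>w. (1 - w powr b) / (1 - w))"
    using assms by (intro continuous_on_divide continuous_on_diff continuous_on_powr' continuous_on_id continuous_on_const) auto
  hence c1: "continuous_on {0..1/2} (Qf b)"
    by (rule continuous_on_cong[THEN iffD1, rotated -1]) (auto simp: Qf_def)
  have "isCont (Qf b) x" if "x \<in> {1/2..1}" for x
  proof (cases "x = 1")
    case True thus ?thesis using Qf_isCont1[OF assms] by simp
  next
    case False
    hence x: "x > 0" "x \<noteq> 1" using that by auto
    have "isCont (\<lambda>w. (1 - w powr b) / (1 - w)) x"
      using x by (intro continuous_intros) auto
    moreover have "eventually (\<lambda>w. w \<in> - {1}) (nhds x)"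
      using x by (intro eventually_nhds_in_open) auto
    hence "eventually (\<lambda>w. (1 - w powr b) / (1 - w) = Qf b w) (nhds x)"
      by eventually_elim (auto simp: Qf_def)
    ultimately show ?thesis using isCont_cong[of "\<lambda>w. (1 - w powr b) / (1 - w)" "Qf b" x] by simp
  qed
  hence c2: "continuous_on {1/2..1} (Qf b)"
    by (intro continuous_at_imp_continuous_on) auto
  have "continuous_on ({0..1/2} \<union> {1/2..1}) (Qf b)"
    by (rule continuous_on_closed_Un[OF _ _ c1 c2]) auto
  moreover have "{0..1/2} \<union> {1/2..1} = {0..(1::real)}" by auto
  ultimately show ?thesis by simp
qed
definition Yf :: "real \<Rightarrow> real \<Rightarrow> real" where
  "Yf a w = (if w = 1 then a / (a+1) else (1 - w powr a) / (1 - w * w powr a))"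

definition Xf :: "real \<Rightarrow> real \<Rightarrow> real" where
  "Xf a w = w * Yf a w"

context
  fixes a :: real
  assumes a: "a > 0"
begin

lemma u_bounds:
  assumes "0 \<le> w" "w < 1"
  shows "0 \<le> w powr a" "w powr a < 1" "w * w powr a < 1" "w * w powr a \<le> w powr a"
proof -
  show "0 \<le> w powr a" by simp
  show u1: "w powr a < 1"
  proof (cases "w = 0")
    case False thus ?thesis using assms a by (simp add: powr01_less_one)
  qed simp
  show "w * w powr a \<le> w powr a" using assms by (simp add: mult_left_le_one_le)
  thus "w * w powr a < 1" using u1 by simp
qed

lemma Yf_Q:
  assumes "0 \<le> w" "w \<le> 1"
  shows "Yf a w = Qf a w / Qf (a+1) w"
proof (cases "w = 1")
  case True thus ?thesis by (simp add: Yf_def Qf_def)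
next
  case False
  hence w1: "w < 1" using assms by simp
  have e: "w powr (a+1) = w * w powr a"
    using assms by (cases "w = 0") (auto simp: powr_add)
  have "1 - w \<noteq> 0" using w1 by simp
  thus ?thesis using False by (simp add: Yf_def Qf_def e)
qed

lemma Qf_pos:
  assumes "0 \<le> w" "w \<le> 1"
  shows "Qf (a+1) w > 0"
proof (cases "w = 1")
  case True thus ?thesis using a by (simp add: Qf_def)
next
  case False
  hence w1: "w < 1" using assms by simp
  have e: "w powr (a+1) = w * w powr a"
    using assms by (cases "w = 0") (auto simp: powr_add)
  show ?thesis using False w1 u_bounds[OF assms(1) w1] by (simp add: Qf_def e)
qed

lemma Yf_cont: "continuous_on {0..1} (Yf a)"
proof -
  have "continuous_on {0..1} (\<lambda>w. Qf a w / Qf (a+1) w)"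
    using a Qf_pos by (intro continuous_on_divide Qf_cont) (auto simp: less_imp_neq[symmetric] dest!: Qf_pos)
  thus ?thesis by (rule continuous_on_cong[THEN iffD1, rotated -1]) (auto simp: Yf_Q)
qed

lemma Xf_cont: "continuous_on {0..1} (Xf a)"
  unfolding Xf_def[abs_def] by (intro continuous_intros Yf_cont)

lemma Yf_bounds:
  assumes "0 \<le> w" "w \<le> 1"
  shows "0 < Yf a w" "Yf a w \<le> 1"
proof -
  have "0 < Yf a w \<and> Yf a w \<le> 1"
  proof (cases "w = 1")
    case True thus ?thesis using a by (simp add: Yf_def)
  next
    case False
    hence w1: "w < 1" using assms by simp
    note u = u_bounds[OF assms(1) w1]
    show ?thesis using False u by (simp add: Yf_def)
  qed
  thus "0 < Yf a w" "Yf a w \<le> 1" by auto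
qed

lemma phi_XY:
  assumes "0 \<le> w" "w \<le> 1"
  shows "phi a (Xf a w) = phi a (Yf a w)"
proof (cases "w = 1")
  case True thus ?thesis by (simp add: Xf_def)
next
  case False
  hence w1: "w < 1" using assms by simp
  note u = u_bounds[OF assms(1) w1]
  define U where "U = w powr a"
  define D where "D = 1 - w * U"
  have D: "D > 0" using u by (simp add: D_def U_def)
  have Y: "Yf a w = (1 - U) / D" using False by (simp add: Yf_def U_def D_def)
  have X: "Xf a w = w * ((1 - U) / D)" using Y by (simp add: Xf_def)
  have Y0: "(1 - U) / D \<ge> 0" using D u by (simp add: U_def)
  define Z where "Z = (1 - U) / D"
  have Z0: "Z \<ge> 0" using Y0 by (simp add: Z_def)
  have m: "(w * Z) powr a = U * Z powr a" unfolding U_def by (rule powr_mult)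
  have s1: "1 - w * Z = (1 - w) / D" using D by (simp add: Z_def D_def field_simps)
  have s2: "1 - Z = U * (1 - w) / D" using D by (simp add: Z_def D_def field_simps)
  have "phi a (Xf a w) = (w * Z) powr a * (1 - w * Z)"
    unfolding X Z_def[symmetric] by (rule phi_alt) (use mult_nonneg_nonneg[OF assms(1) Y0] in \<open>simp add: Z_def\<close>)
  also have "\<dots> = Z powr a * (1 - Z)" by (simp add: m s1 s2)
  also have "\<dots> = phi a (Yf a w)" unfolding Y Z_def by (rule phi_alt[symmetric, OF Y0])
  finally show ?thesis .
qed

end
context
  fixes a :: real
  assumes a: "a > 0"
begin

lemma p_bounds: "0 < a/(a+1)" "a/(a+1) < 1"
  using a by auto

lemma inj1: "inj_on (phi a) {0..a/(a+1)}"
proof (rule inj_onI)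
  fix x y assume xy: "x \<in> {0..a/(a+1)}" "y \<in> {0..a/(a+1)}" "phi a x = phi a y"
  show "x = y"
  proof (rule ccontr)
    assume "x \<noteq> y"
    hence "x < y \<or> y < x" by auto
    thus False using phi_incr[OF a, of x y] phi_incr[OF a, of y x] xy by auto
  qed
qed

lemma inj2: "inj_on (phi a) {a/(a+1)..1}"
proof (rule inj_onI)
  fix x y assume xy: "x \<in> {a/(a+1)..1}" "y \<in> {a/(a+1)..1}" "phi a x = phi a y"
  show "x = y"
  proof (rule ccontr)
    assume "x \<noteq> y"
    hence "x < y \<or> y < x" by auto
    thus False using phi_decr[OF a, of x y] phi_decr[OF a, of y x] xy by auto
  qed
qed

lemma XY_order:
  assumes "0 \<le> w" "w \<le> 1"
  shows "0 \<le> Xf a w" "Xf a w \<le> a/(a+1)" "a/(a+1) \<le> Yf a w" "Yf a w \<le> 1"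
proof -
  note Yb = Yf_bounds[OF a assms]
  show X0: "0 \<le> Xf a w" using Yb assms by (simp add: Xf_def)
  show "Yf a w \<le> 1" using Yb by simp
  have "Xf a w \<le> a/(a+1) \<and> a/(a+1) \<le> Yf a w"
  proof (cases "w = 1")
    case True thus ?thesis by (simp add: Xf_def Yf_def)
  next
    case False
    hence "w < 1" using assms by simp
    hence XY: "Xf a w < Yf a w" using Yb by (simp add: Xf_def)
    have eq: "phi a (Xf a w) = phi a (Yf a w)" by (rule phi_XY[OF a assms])
    have 1: "a/(a+1) \<le> Yf a w"
    proof (rule ccontr)
      assume "\<not> a/(a+1) \<le> Yf a w"
      hence "phi a (Xf a w) < phi a (Yf a w)" using phi_incr[OF a X0 XY] by simp
      thus False using eq by simp
    qed
    have 2: "Xf a w \<le> a/(a+1)"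
    proof (rule ccontr)
      assume "\<not> Xf a w \<le> a/(a+1)"
      hence "phi a (Yf a w) < phi a (Xf a w)" using phi_decr[OF a _ XY] Yb by simp
      thus False using eq by simp
    qed
    from 1 2 show ?thesis by simp
  qed
  thus "Xf a w \<le> a/(a+1)" "a/(a+1) \<le> Yf a w" by auto
qed

lemma f_X:
  assumes "0 \<le> w" "w \<le> 1"
  shows "f a (Xf a w) = Yf a w"
proof -
  note o = XY_order[OF assms]
  have "f a (Xf a w) = the_inv_into {a/(a+1)..1} (phi a) (phi a (Yf a w))"
    using o by (simp add: f_def xzero_def phi_XY[OF a assms])
  also have "\<dots> = Yf a w" using o by (intro the_inv_into_f_f inj2) auto
  finally show ?thesis .
qed

lemma f_Y:
  assumes "0 \<le> w" "w \<le> 1"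
  shows "f a (Yf a w) = Xf a w"
proof (cases "Yf a w \<le> a/(a+1)")
  case True
  note o = XY_order[OF assms]
  have Yp: "Yf a w = a/(a+1)" using True o by linarith
  have pm: "a/(a+1) \<in> {0..a/(a+1)}" "Xf a w \<in> {0..a/(a+1)}" using o p_bounds by auto
  have "phi a (Xf a w) = phi a (a/(a+1))" using phi_XY[OF a assms] Yp by simp
  hence Xp: "Xf a w = a/(a+1)" by (rule inj_onD[OF inj1 _ pm(2) pm(1)])
  have pm2: "a/(a+1) \<in> {a/(a+1)..1}" using p_bounds by auto
  have "f a (Yf a w) = the_inv_into {a/(a+1)..1} (phi a) (phi a (a/(a+1)))"
    unfolding Yp f_def xzero_def by simp
  also have "\<dots> = a/(a+1)" by (rule the_inv_into_f_f[OF inj2 pm2])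
  finally show ?thesis using Xp by simp
next
  case False
  note o = XY_order[OF assms]
  have "f a (Yf a w) = the_inv_into {0..a/(a+1)} (phi a) (phi a (Yf a w))"
    using False unfolding f_def xzero_def by simp
  also have "\<dots> = the_inv_into {0..a/(a+1)} (phi a) (phi a (Xf a w))"
    by (simp only: phi_XY[OF a assms])
  also have "\<dots> = Xf a w" using o by (intro the_inv_into_f_f inj1) auto
  finally show ?thesis .
qed

lemma XY_ends: "Xf a 0 = 0" "Xf a 1 = a/(a+1)" "Yf a 0 = 1" "Yf a 1 = a/(a+1)"
  by (auto simp: Xf_def Yf_def)

lemma f_cont1: "continuous_on {0..a/(a+1)} (f a)"
proof -
  let ?g = "the_inv_into {a/(a+1)..1} (phi a)"
  have pc: "continuous_on {a/(a+1)..1} (phi a)"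
    by (rule continuous_on_subset[OF phi_cont[OF a]]) (use p_bounds in auto)
  have gc: "continuous_on (phi a ` {a/(a+1)..1}) ?g"
    by (rule continuous_on_inv[OF pc]) (auto intro: the_inv_into_f_f inj2)
  have sub: "phi a ` {0..a/(a+1)} \<subseteq> phi a ` {a/(a+1)..1}"
  proof
    fix z assume "z \<in> phi a ` {0..a/(a+1)}"
    then obtain x where x: "x \<in> {0..a/(a+1)}" "z = phi a x" by auto
    obtain w where w: "0 \<le> w" "w \<le> 1" "Xf a w = x"
      using IVT'[of "Xf a" 0 x 1] Xf_cont[OF a] x XY_ends by auto
    have "z = phi a (Yf a w)" using x w phi_XY[OF a w(1,2)] by simp
    moreover have "Yf a w \<in> {a/(a+1)..1}" using XY_order[OF w(1,2)] by auto
    ultimately show "z \<in> phi a ` {a/(a+1)..1}" by auto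
  qed
  have "continuous_on {0..a/(a+1)} (?g \<circ> phi a)"
    by (rule continuous_on_compose[OF continuous_on_subset[OF phi_cont[OF a]] continuous_on_subset[OF gc]])
       (use sub in auto)
  thus ?thesis
    by (rule continuous_on_cong[THEN iffD1, rotated -1]) (auto simp: f_def xzero_def)
qed

lemma f_cont2: "continuous_on {a/(a+1)..1} (f a)"
proof -
  let ?g = "the_inv_into {0..a/(a+1)} (phi a)"
  have pc: "continuous_on {0..a/(a+1)} (phi a)"
    by (rule continuous_on_subset[OF phi_cont[OF a]]) auto
  have gc: "continuous_on (phi a ` {0..a/(a+1)}) ?g"
    by (rule continuous_on_inv[OF pc]) (auto intro: the_inv_into_f_f inj1)
  have sub: "phi a ` {a/(a+1)..1} \<subseteq> phi a ` {0..a/(a+1)}"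
  proof
    fix z assume "z \<in> phi a ` {a/(a+1)..1}"
    then obtain x where x: "x \<in> {a/(a+1)..1}" "z = phi a x" by auto
    obtain w where w: "0 \<le> w" "w \<le> 1" "Yf a w = x"
      using IVT2'[of "Yf a" 1 x 0] Yf_cont[OF a] x XY_ends by auto
    have "z = phi a (Xf a w)" using x w phi_XY[OF a w(1,2)] by simp
    moreover have "Xf a w \<in> {0..a/(a+1)}" using XY_order[OF w(1,2)] by auto
    ultimately show "z \<in> phi a ` {0..a/(a+1)}" by auto
  qed
  have "continuous_on {a/(a+1)..1} (?g \<circ> phi a)"
    by (rule continuous_on_compose[OF continuous_on_subset[OF phi_cont[OF a]] continuous_on_subset[OF gc]])
       (use sub p_bounds in auto)
  moreover have eq: "(?g \<circ> phi a) x = f a x" if "x \<in> {a/(a+1)..1}" for x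
  proof (cases "x = a/(a+1)")
    case True
    have "(?g \<circ> phi a) x = x" using True p_bounds by (simp add: the_inv_into_f_f[OF inj1])
    moreover have "f a x = x" using True p_bounds by (simp add: f_def xzero_def the_inv_into_f_f[OF inj2])
    ultimately show ?thesis by simp
  next
    case False thus ?thesis using that by (auto simp: f_def xzero_def)
  qed
  moreover have "continuous_on {a/(a+1)..1} (?g \<circ> phi a) = continuous_on {a/(a+1)..1} (f a)"
    by (rule continuous_on_cong[OF refl eq])
  ultimately show ?thesis by simp
qed

end
definition Yd :: "real \<Rightarrow> real \<Rightarrow> real" where
  "Yd a w = ((-(a * w powr (a-1))) * (1 - w * w powr a) + (1 - w powr a) * (w powr a + w * (a * w powr (a-1)))) / (1 - w * w powr a)^2"

definition Rf :: "real \<Rightarrow> real \<Rightarrow> real" where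
  "Rf a w = (1 - (w powr a)^2) / (1 - w * w powr a)"

definition Hf :: "real \<Rightarrow> real \<Rightarrow> real" where
  "Hf a w = w * (1 - w powr a) * Yf a w / (a+1)"

context
  fixes a :: real
  assumes a: "a > 0"
begin

lemma Yf_deriv:
  assumes "0 < w" "w < 1"
  shows "(Yf a has_real_derivative Yd a w) (at w)"
proof -
  note u = u_bounds[OF a less_imp_le[OF assms(1)] assms(2)]
  have ne: "w * w powr a \<noteq> 1" using u(3) by simp
  have d: "((\<lambda>w. (1 - w powr a) / (1 - w * w powr a)) has_real_derivative Yd a w) (at w)"
    using assms u ne unfolding Yd_def
    by (auto intro!: derivative_eq_intros simp: power2_eq_square algebra_simps)
  have "eventually (\<lambda>x. x \<in> - {1}) (nhds w)"
    using assms by (intro eventually_nhds_in_open) auto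
  hence ev: "eventually (\<lambda>x. (1 - x powr a) / (1 - x * x powr a) = Yf a x) (nhds w)"
    by eventually_elim (auto simp: Yf_def)
  show ?thesis using d DERIV_cong_ev[OF refl ev refl] by simp
qed

lemma Xf_deriv:
  assumes "0 < w" "w < 1"
  shows "(Xf a has_real_derivative (Yf a w + w * Yd a w)) (at w)"
  unfolding Xf_def[abs_def]
  by (auto intro!: derivative_eq_intros Yf_deriv[OF assms])

lemma H_alg:
  fixes w u E Y V R :: real
  assumes "E \<noteq> 0" "E = 1 - w * u" "Y * E = 1 - u" "V * E^2 = - a * u * E + w * (1 - u) * u * (1 + a)" "R * E = 1 - u^2"
  shows "(1 - u) * Y - a * u * Y + (1 - u) * V = (a + 1) * Y^2 - a * R"
  using assms by algebra

lemma powr_m1: "0 < w \<Longrightarrow> w * w powr (a - 1) = w powr a"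
proof -
  assume w: "0 < w"
  have "w powr a = w powr ((a - 1) + 1)" by simp
  also have "\<dots> = w powr (a - 1) * w" using w by (simp only: powr_add powr_one)
  finally show ?thesis by simp
qed

lemma Hf_deriv:
  assumes "0 < w" "w < 1"
  shows "(Hf a has_real_derivative (Yf a w ^ 2 - a / (a+1) * Rf a w)) (at w)"
proof -
  note u = u_bounds[OF a less_imp_le[OF assms(1)] assms(2)]
  define U where "U = w powr a"
  define E where "E = 1 - w * U"
  have E: "E \<noteq> 0" using u by (simp add: E_def U_def)
  have d: "(Hf a has_real_derivative ((1 - U) * Yf a w + w * (-(a * w powr (a-1))) * Yf a w + w * (1 - U) * Yd a w) / (a+1)) (at w)"
  proof -
    have "((\<lambda>w. w * (1 - w powr a) * Yf a w) has_real_derivative ((1 - U) * Yf a w + w * (-(a * w powr (a-1))) * Yf a w + w * (1 - U) * Yd a w)) (at w)"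
      unfolding U_def using assms
      by (auto intro!: derivative_eq_intros Yf_deriv simp: algebra_simps)
    from DERIV_cdivide[OF this, of "a+1"] show ?thesis unfolding Hf_def[abs_def] .
  qed
  have Y: "Yf a w * E = 1 - U" using E assms by (simp add: Yf_def E_def U_def)
  have V: "(w * Yd a w) * E^2 = - a * U * E + w * (1 - U) * U * (1 + a)"
  proof -
    have "(w * Yd a w) * E^2 = w * ((-(a * w powr (a-1))) * E + (1 - U) * (U + w * (a * w powr (a-1))))"
      using E by (simp add: Yd_def E_def U_def)
    also have "\<dots> = - a * (w * w powr (a-1)) * E + w * (1 - U) * (U + a * (w * w powr (a-1)))"
      by (simp add: algebra_simps)
    also have "\<dots> = - a * U * E + w * (1 - U) * U * (1 + a)"
      using powr_m1[OF assms(1)] by (simp add: U_def algebra_simps)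
    finally show ?thesis .
  qed
  have R: "Rf a w * E = 1 - U^2" using E by (simp add: Rf_def E_def U_def)
  have key: "(1 - U) * Yf a w - a * U * Yf a w + (1 - U) * (w * Yd a w) = (a + 1) * (Yf a w)^2 - a * Rf a w"
    by (rule H_alg[OF E E_def Y V R])
  have "((1 - U) * Yf a w + w * (-(a * w powr (a-1))) * Yf a w + w * (1 - U) * Yd a w) / (a+1)
      = ((1 - U) * Yf a w - a * U * Yf a w + (1 - U) * (w * Yd a w)) / (a+1)"
    using powr_m1[OF assms(1)] by (simp add: U_def algebra_simps)
  also have "\<dots> = Yf a w ^ 2 - a / (a+1) * Rf a w"
    using a unfolding key by (simp add: field_simps)
  finally show ?thesis using d by simp
qed

lemma Hf_cont: "continuous_on {0..1} (Hf a)"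
  unfolding Hf_def[abs_def] using a
  by (intro continuous_on_divide continuous_on_mult continuous_on_diff continuous_on_powr' continuous_on_id continuous_on_const Yf_cont) auto

lemma Hf_ends: "Hf a 0 = 0" "Hf a 1 = 0"
  by (auto simp: Hf_def)

lemma Kf_deriv:
  assumes "0 < w" "w < 1"
  shows "((\<lambda>w. w * Yf a w ^ 2) has_real_derivative (Yf a w ^ 2 + w * (2 * Yf a w * Yd a w))) (at w)"
  using assms by (auto intro!: derivative_eq_intros Yf_deriv simp: algebra_simps power2_eq_square)

end
context
  fixes a :: real
  assumes a: "a > 0"
begin

lemma main_integrals:
  defines "p \<equiv> a / (a+1)"
  assumes L: "((\<lambda>w. if 0 < w \<and> w < 1 then (1 - (w powr a)^2) / (1 - w * w powr a) else 0) has_integral L) {0..1}"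
  shows "integral {0..1} (f a) = p * L" "integral {0..p} (f a) = (p * L + p^2) / 2"
proof -
  have pb: "0 < p" "p < 1" using a by (auto simp: p_def)
  have fc1: "continuous_on {0..p} (f a)" using f_cont1[OF a] by (simp add: p_def)
  have fc2: "continuous_on {p..1} (f a)" using f_cont2[OF a] by (simp add: p_def)
  have XE: "Xf a 0 = 0" "Xf a 1 = p" "Yf a 0 = 1" "Yf a 1 = p" using XY_ends[OF a] by (auto simp: p_def)
  have A0: "((\<lambda>w. (Yf a w + w * Yd a w) *\<^sub>R f a (Xf a w)) has_integral integral {Xf a 0..Xf a 1} (f a)) {0..1}"
  proof (rule has_integral_substitution_strong[where s="{0,1}" and c=0 and d=p])
    show "Xf a 0 \<le> Xf a 1" using XE pb by simp
    show "Xf a ` {0..1} \<subseteq> {0..p}" using XY_order[OF a] by (auto simp: p_def)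
    show "continuous_on {0..p} (f a)" by (rule fc1)
    show "continuous_on {0..1} (Xf a)" by (rule Xf_cont[OF a])
    show "(Xf a has_real_derivative Yf a x + x * Yd a x) (at x within {0..1})" if "x \<in> {0..1} - {0,1}" for x
      using that by (intro has_field_derivative_at_within[OF Xf_deriv[OF a]]) auto
  qed auto
  have A: "((\<lambda>w. (Yf a w + w * Yd a w) * Yf a w) has_integral integral {0..p} (f a)) {0..1}"
  proof -
    have A1: "((\<lambda>w. (Yf a w + w * Yd a w) *\<^sub>R f a (Xf a w)) has_integral integral {0..p} (f a)) {0..1}"
      using A0 unfolding XE .
    show ?thesis
      by (rule has_integral_spike_finite[where S="{}", OF _ _ A1]) (simp_all add: f_X[OF a])
  qed
  have B0: "((\<lambda>w. Yd a w *\<^sub>R f a (Yf a w)) has_integral (integral {Yf a 0..Yf a 1} (f a) - integral {Yf a 1..Yf a 0} (f a))) {0..1}"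
  proof (rule has_integral_substitution_general[where s="{0,1}" and c=p and d=1])
    show "Yf a ` {0..1} \<subseteq> {p..1}" using XY_order[OF a] by (auto simp: p_def)
    show "continuous_on {p..1} (f a)" by (rule fc2)
    show "continuous_on {0..1} (Yf a)" by (rule Yf_cont[OF a])
    show "(Yf a has_real_derivative Yd a x) (at x within {0..1})" if "x \<in> {0..1} - {0,1}" for x
      using that by (intro has_field_derivative_at_within[OF Yf_deriv[OF a]]) auto
  qed auto
  have B: "((\<lambda>w. Yd a w * Xf a w) has_integral (- integral {p..1} (f a))) {0..1}"
  proof -
    have "{1..p} = {}" using pb by auto
    hence B1: "((\<lambda>w. Yd a w *\<^sub>R f a (Yf a w)) has_integral (- integral {p..1} (f a))) {0..1}"
      using B0 unfolding XE by simp
    show ?thesis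
      by (rule has_integral_spike_finite[where S="{}", OF _ _ B1]) (simp_all add: f_Y[OF a])
  qed
  have C0: "((\<lambda>w. (Yf a w + w * Yd a w) * Yf a w - Yd a w * Xf a w) has_integral
          (integral {0..p} (f a) + integral {p..1} (f a))) {0..1}"
    using has_integral_diff[OF A B] by simp
  have "(\<lambda>w. (Yf a w + w * Yd a w) * Yf a w - Yd a w * Xf a w) = (\<lambda>w. Yf a w ^ 2)"
    by (rule ext) (simp add: Xf_def algebra_simps power2_eq_square)
  hence C1: "((\<lambda>w. Yf a w ^ 2) has_integral (integral {0..p} (f a) + integral {p..1} (f a))) {0..1}"
    using C0 by simp
  have "(f a has_integral (integral {0..p} (f a) + integral {p..1} (f a))) {0..1}"
    using pb by (intro has_integral_combine[of 0 p 1] integrable_integral integrable_continuous_real fc1 fc2) auto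
  hence I: "integral {0..1} (f a) = integral {0..p} (f a) + integral {p..1} (f a)"
    by (rule integral_unique)
  have D: "((\<lambda>w. Yf a w ^ 2 - p * Rf a w) has_integral (Hf a 1 - Hf a 0)) {0..1}"
  proof (rule fundamental_theorem_of_calculus_interior)
    show "continuous_on {0..1} (Hf a)" by (rule Hf_cont[OF a])
    show "(Hf a has_vector_derivative Yf a x ^ 2 - p * Rf a x) (at x)" if "x \<in> {0<..<1}" for x
      using Hf_deriv[OF a, of x] that by (simp add: p_def has_real_derivative_iff_has_vector_derivative)
  qed simp
  have E: "(Rf a has_integral L) {0..1}"
    by (rule has_integral_spike_finite[where S="{0,1}", OF _ _ L]) (auto simp: Rf_def)
  have "((\<lambda>w. (Yf a w ^ 2 - p * Rf a w) + p * Rf a w) has_integral ((Hf a 1 - Hf a 0) + p * L)) {0..1}"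
    by (intro has_integral_add D has_integral_mult_right E)
  hence "((\<lambda>w. Yf a w ^ 2) has_integral (p * L)) {0..1}" using Hf_ends[OF a] by simp
  hence IY: "integral {0..p} (f a) + integral {p..1} (f a) = p * L"
    using C1 has_integral_unique by blast
  thus "integral {0..1} (f a) = p * L" using I by simp
  have K: "((\<lambda>w. Yf a w ^ 2 + w * (2 * Yf a w * Yd a w)) has_integral (1 * Yf a 1 ^ 2 - 0 * Yf a 0 ^ 2)) {0..1}"
  proof (rule fundamental_theorem_of_calculus_interior[where f="\<lambda>w. w * Yf a w ^ 2"])
    show "continuous_on {0..1} (\<lambda>w. w * Yf a w ^ 2)"
      by (intro continuous_intros Yf_cont[OF a])
    show "((\<lambda>w. w * Yf a w ^ 2) has_vector_derivative Yf a x ^ 2 + x * (2 * Yf a x * Yd a x)) (at x)" if "x \<in> {0<..<1}" for x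
      using Kf_deriv[OF a, of x] that by (simp add: has_real_derivative_iff_has_vector_derivative)
  qed simp
  have "((\<lambda>w. (1/2) * (Yf a w ^ 2 + (Yf a w ^ 2 + w * (2 * Yf a w * Yd a w)))) has_integral
         ((1/2) * (p * L + (1 * Yf a 1 ^ 2 - 0 * Yf a 0 ^ 2)))) {0..1}"
    using C1 IY by (intro has_integral_mult_right has_integral_add K) simp_all
  moreover have "(\<lambda>w. (1/2) * (Yf a w ^ 2 + (Yf a w ^ 2 + w * (2 * Yf a w * Yd a w))))
      = (\<lambda>w. (Yf a w + w * Yd a w) * Yf a w)"
    by (rule ext) (simp add: algebra_simps power2_eq_square)
  ultimately have "((\<lambda>w. (Yf a w + w * Yd a w) * Yf a w) has_integral ((p * L + p^2) / 2)) {0..1}"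
    using XE by simp
  thus "integral {0..p} (f a) = (p * L + p^2) / 2"
    using A has_integral_unique by blast
qed

end
theorem proposition7:
  fixes a :: real
  assumes "a > 0"
  shows "integral {0..1} (f a) =
           1 / (1 + a) * (1 - a * pi / (a + 1) * cot (a * pi / (a + 1)))
         \<and> integral {0..a / (a + 1)} (f a) =
           1 / (2 * (1 + a)^2) * (1 + a + a^2 - a * pi * cot (a * pi / (a + 1)))"
proof -
  have a: "a > 0" by (rule assms)
  define C where "C = cot (a * pi / (a + 1))"
  have "pi * (1 / (a+1)) = pi - a * pi / (a+1)" using a by (simp add: field_simps)
  hence cc: "cot (pi * (1 / (a+1))) = - C"
    by (simp add: C_def cot_def sin_diff cos_diff)
  have one: "1 / (1 - 1 / (a+1)) = (a+1) / a" using a by (simp add: field_simps)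
  have Z: "((\<lambda>w. if 0 < w \<and> w < 1 then (1 - (w powr a)^2) / (1 - w * w powr a) else 0) has_integral
           (1 / (a+1) * (pi * (- C) + (a+1) / a))) {0..1}"
    using series_integral[OF a] unfolding cc one .
  note M = main_integrals[OF a Z]
  have e1: "a / (a+1) * (1 / (a+1) * (pi * (- C) + (a+1) / a)) = 1 / (1 + a) * (1 - a * pi / (a + 1) * C)"
    using a by (simp add: divide_simps) (simp add: algebra_simps)
  have e2: "(a / (a+1) * (1 / (a+1) * (pi * (- C) + (a+1) / a)) + (a / (a+1))^2) / 2
      = 1 / (2 * (1 + a)^2) * (1 + a + a^2 - a * pi * C)"
    using a by (simp add: divide_simps) (simp add: algebra_simps power2_eq_square)
  show ?thesis using trans[OF M(1) e1] trans[OF M(2) e2] unfolding C_def by (rule conjI)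
qed

end
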